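(* Let $f_{1,\infty}=\{f_n\}$ be a sequence of continuous maps $f_n:[0,1]\to[0,1]$ converging uniformly to $f$, such that $\{f_n^k\}_{k\in\mathbb{N}}$ converges collectively to $\{f^k\}_{k\in\mathbb{N}}$ and $f_{1,\infty}$ is feebly open. Then the following are equivalent for $([0,1],f_{1,\infty})$: (1) it is strongly multi-sensitive; (2) it is $\mathcal{N}$-sensitive; (3) it is multi-sensitive; (4) it is sensitive.
   Context: Usual metric $d$ on $[0,1]$. Write $f_i^n=f_{n+i-1}\circ\cdots\circ f_i$, $f_i^0=\mathrm{id}$. Collective convergence: for every $\epsilon>0$ there is $N_0$ such that $\sup_x d(f_N^k(x),f^k(x))<\epsilon$ for all $N\ge N_0$ and all $k\in\mathbb{N}$. Feebly open: $\mathrm{int}(f_n(U))\ne\varnothing$ for every nonempty open $U$ and every $n$. $f_{1,\infty}^{[k]}=\{f^k_{k(n-1)+1}\}_{n=1}^\infty$ (its $n$-fold composition from index $1$ is $f_1^{kn}$). $N_{f_{1,\infty}}(V,\delta)=\{n\in\mathbb{N}:\exists u,v\in V,\ d(f_1^n(u),f_1^n(v))>\delta\}$. Sensitive: there is $\delta>0$ with $N_{f_{1,\infty}}(V,\delta)\ne\varnothing$ for all nonempty open $V$. Multi-sensitive: there is $\delta>0$ with $\bigcap_{i=1}^m N_{f_{1,\infty}}(V_i,\delta)\ne\varnothing$ for every finite collection of nonempty open $V_1,\dots,V_m$. For $\mathbf{v}=(v_1,\dots,v_r)\in\mathbb{N}^r$, multi-sensitive with respect to $\mathbf{v}$: there is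 $\delta>0$ such that $\bigcap_{i=1}^r N_{f_{1,\infty}^{[v_i]}}(U_i,\delta)\ne\varnothing$ for all nonempty open $U_1,\dots,U_r$; $\mathcal{N}$-sensitive: multi-sensitive with respect to $(1,\dots,n)$ for every $n$; strongly multi-sensitive: multi-sensitive with respect to every vector in $\mathbb{N}^r$, for every $r$. *)

theory Defs
  imports "HOL-Analysis.Analysis"
begin

text \<open>Sequences of maps are indexed by nat; index 0 is unused, the paper's
  f_1, f_2, ... are f 1, f 2, ....\<close>

text \<open>fcomp f i n = f_i^n = f_(i+n-1) o ... o f_i, and f_i^0 = id.\<close>
fun fcomp :: "(nat \<Rightarrow> real \<Rightarrow> real) \<Rightarrow> nat \<Rightarrow> nat \<Rightarrow> real \<Rightarrow> real" where
  "fcomp f i 0 = id"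
| "fcomp f i (Suc n) = f (i + n) \<circ> fcomp f i n"

definition I01 :: "real set" where "I01 = {0..1}"

definition collectively_converges ::
  "(nat \<Rightarrow> real \<Rightarrow> real) \<Rightarrow> (real \<Rightarrow> real) \<Rightarrow> bool" where
  "collectively_converges f g \<longleftrightarrow>
     (\<forall>\<epsilon>>0. \<exists>N0. \<forall>N\<ge>N0. \<forall>k::nat.
        (SUP x\<in>I01. dist (fcomp f N k x) ((g ^^ k) x)) < \<epsilon>)"

definition feebly_open :: "(nat \<Rightarrow> real \<Rightarrow> real) \<Rightarrow> bool" where
  "feebly_open f \<longleftrightarrow>
     (\<forall>U n. openin (top_of_set I01) U \<and> U \<noteq> {} \<and> n \<ge> 1 \<longrightarrow>
        (top_of_set I01) interior_of (f n ` U) \<noteq> {})"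

definition fpow_seq :: "(nat \<Rightarrow> real \<Rightarrow> real) \<Rightarrow> nat \<Rightarrow> nat \<Rightarrow> real \<Rightarrow> real" where
  "fpow_seq f k = (\<lambda>n. fcomp f (k * (n - 1) + 1) k)"

definition Nset :: "(nat \<Rightarrow> real \<Rightarrow> real) \<Rightarrow> real set \<Rightarrow> real \<Rightarrow> nat set" where
  "Nset f V \<delta> = {n. n \<ge> 1 \<and> (\<exists>u\<in>V. \<exists>v\<in>V. dist (fcomp f 1 n u) (fcomp f 1 n v) > \<delta>)}"

definition nonempty_open :: "real set \<Rightarrow> bool" where
  "nonempty_open V \<longleftrightarrow> openin (top_of_set I01) V \<and> V \<noteq> {}"

definition sensitive :: "(nat \<Rightarrow> real \<Rightarrow> real) \<Rightarrow> bool" where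
  "sensitive f \<longleftrightarrow> (\<exists>\<delta>>0. \<forall>V. nonempty_open V \<longrightarrow> Nset f V \<delta> \<noteq> {})"

definition multi_sensitive :: "(nat \<Rightarrow> real \<Rightarrow> real) \<Rightarrow> bool" where
  "multi_sensitive f \<longleftrightarrow> (\<exists>\<delta>>0. \<forall>Vs::real set list.
     Vs \<noteq> [] \<and> (\<forall>V\<in>set Vs. nonempty_open V) \<longrightarrow>
       (\<Inter>i<length Vs. Nset f (Vs ! i) \<delta>) \<noteq> {})"

definition multi_sensitive_wrt :: "(nat \<Rightarrow> real \<Rightarrow> real) \<Rightarrow> nat list \<Rightarrow> bool" where
  "multi_sensitive_wrt f vs \<longleftrightarrow> (\<exists>\<delta>>0. \<forall>Us::real set list.
     length Us = length vs \<and> (\<forall>U\<in>set Us. nonempty_open U) \<longrightarrow>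
       (\<Inter>i<length vs. Nset (fpow_seq f (vs ! i)) (Us ! i) \<delta>) \<noteq> {})"

definition N_sensitive :: "(nat \<Rightarrow> real \<Rightarrow> real) \<Rightarrow> bool" where
  "N_sensitive f \<longleftrightarrow> (\<forall>n\<ge>1. multi_sensitive_wrt f [1..<n+1])"

definition strongly_multi_sensitive :: "(nat \<Rightarrow> real \<Rightarrow> real) \<Rightarrow> bool" where
  "strongly_multi_sensitive f \<longleftrightarrow>
     (\<forall>vs. vs \<noteq> [] \<and> (\<forall>v\<in>set vs. v \<ge> 1) \<longrightarrow> multi_sensitive_wrt f vs)"

end

theory Submission
  imports Defs
begin

lemma finite_pos_min:
  fixes P :: "'a \<Rightarrow> real \<Rightarrow> bool"
  assumes "finite S" "\<forall>i\<in>S. \<exists>c>0. P i c"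
    and "\<And>i c c'. P i c \<Longrightarrow> 0 < c' \<Longrightarrow> c' \<le> c \<Longrightarrow> P i c'"
  shows "\<exists>c>0. \<forall>i\<in>S. P i c"
  using assms(1,2)
proof (induction S rule: finite_induct)
  case empty
  then show ?case by (auto intro: exI[of _ 1])
next
  case (insert x F)
  then obtain c where c: "c > 0" "\<forall>i\<in>F. P i c" by auto
  from insert obtain d where d: "d > 0" "P x d" by auto
  show ?case
    apply (rule exI[of _ "min c d"])
    using c d assms(3)[of x d "min c d"] assms(3)[of _ c "min c d"] by auto
qed

lemma graph_cycle:
  assumes fin: "finite S"
    and tr: "\<And>a b c. R a b \<Longrightarrow> R b c \<Longrightarrow> R a c"
    and succ: "\<And>i. i \<in> S \<Longrightarrow> \<exists>j\<in>S. R i j"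
    and i: "i \<in> S"
  shows "\<exists>j\<in>S. R i j \<and> R j j"
proof -
  obtain nx where nx: "\<And>i. i \<in> S \<Longrightarrow> nx i \<in> S \<and> R i (nx i)"
    using succ by (metis (no_types))
  define x where "x = (\<lambda>m. (nx ^^ m) i)"
  have xS: "x m \<in> S" for m
    by (induction m) (auto simp: x_def i nx)
  have step: "R (x m) (x (Suc m))" for m
    using nx[OF xS[of m]] by (simp add: x_def)
  have chain: "R (x a) (x (a + Suc d))" for a d
  proof (induction d)
    case 0 then show ?case using step[of a] by simp
  next
    case (Suc d) then show ?case using step[of "a + Suc d"] tr by auto
  qed
  have "range x \<subseteq> S" using xS by auto
  hence "finite (range x)" using fin finite_subset by auto
  hence "\<not> inj x" using finite_imageD by auto
  then obtain a b where ab: "a \<noteq> b" "x a = x b" unfolding inj_def by auto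
  obtain a' b' where ab': "a' < b'" "x a' = x b'"
  proof (cases "a < b")
    case True then show ?thesis using ab that by blast
  next
    case False then show ?thesis using ab that[of b a] by simp
  qed
  obtain d where b': "b' = a' + Suc d" using ab'(1) by (auto dest: less_imp_Suc_add)
  have "R (x a') (x b')" using chain[of a' d] b' by simp
  hence "R (x b') (x b')" using ab'(2) by simp
  moreover have "R i (x b')"
  proof -
    have "R (x 0) (x (0 + Suc (a' + d)))" by (rule chain)
    then show ?thesis using b' by (simp add: x_def)
  qed
  ultimately show ?thesis using xS by blast
qed

lemma fcomp_add: "fcomp f i (a + s) = fcomp f (i + a) s \<circ> fcomp f i a"
  by (induction s) (auto simp: add.assoc)

lemma fcomp_pow: "fcomp (fpow_seq f k) 1 n = fcomp f 1 (k * n)"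
proof (induction n)
  case 0 then show ?case by simp
next
  case (Suc n)
  have "fcomp f 1 (k * n + k) = fcomp f (1 + k * n) k \<circ> fcomp f 1 (k * n)"
    by (rule fcomp_add)
  then show ?case using Suc by (simp add: fpow_seq_def add.commute)
qed

lemma Nset_pow: "n \<in> Nset (fpow_seq f k) U d \<longleftrightarrow> n \<ge> 1 \<and> (\<exists>u\<in>U. \<exists>v\<in>U. dist (fcomp f 1 (k*n) u) (fcomp f 1 (k*n) v) > d)"
  unfolding Nset_def fcomp_pow by simp

lemma fcomp_maps:
  assumes "\<And>n. n \<ge> 1 \<Longrightarrow> f n ` I01 \<subseteq> I01" "i \<ge> 1" "x \<in> I01"
  shows "fcomp f i k x \<in> I01"
  using assms by (induction k) (auto simp: image_subset_iff)

lemma fcomp_cont: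
  assumes "\<And>n. n \<ge> 1 \<Longrightarrow> continuous_on I01 (f n)" "\<And>n. n \<ge> 1 \<Longrightarrow> f n ` I01 \<subseteq> I01" "i \<ge> 1"
  shows "continuous_on I01 (fcomp f i k)"
proof (induction k)
  case 0 then show ?case by simp
next
  case (Suc k)
  have "fcomp f i k ` I01 \<subseteq> I01" using fcomp_maps[OF assms(2) assms(3)] by auto
  then show ?case using Suc assms(1)[of "i+k"] assms(3)
    by (auto intro: continuous_on_compose2)
qed

lemma closed_I01: "closed I01" unfolding I01_def by simp

lemma g_maps:
  assumes "\<And>n. n \<ge> 1 \<Longrightarrow> f n ` I01 \<subseteq> I01" "uniform_limit I01 f g sequentially" "x \<in> I01"
  shows "g x \<in> I01"
proof -
  have "(\<lambda>n. f n x) \<longlonglongrightarrow> g x" using tendsto_uniform_limitI[OF assms(2,3)] .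
  moreover have "eventually (\<lambda>n. f n x \<in> I01) sequentially"
    using assms(1,3) by (auto simp: eventually_sequentially image_subset_iff intro!: exI[of _ 1])
  ultimately show ?thesis using closed_I01 by (metis Lim_in_closed_set trivial_limit_sequentially)
qed

lemma g_cont:
  assumes "\<And>n. n \<ge> 1 \<Longrightarrow> continuous_on I01 (f n)" "uniform_limit I01 f g sequentially"
  shows "continuous_on I01 g"
  apply (rule uniform_limit_theorem[OF _ assms(2)])
  using assms(1) by (auto simp: eventually_sequentially intro!: exI[of _ 1])

lemma gpow_maps:
  assumes "\<And>x. x \<in> I01 \<Longrightarrow> g x \<in> I01" "x \<in> I01"
  shows "(g ^^ k) x \<in> I01"
  using assms by (induction k) auto

lemma gpow_cont:
  assumes "\<And>x. x \<in> I01 \<Longrightarrow> g x \<in> I01" "continuous_on I01 g"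
  shows "continuous_on I01 (g ^^ k)"
proof (induction k)
  case 0 then show ?case by (simp add: continuous_on_id)
next
  case (Suc k)
  have "(g ^^ k) ` I01 \<subseteq> I01" using gpow_maps[OF assms(1)] by auto
  then show ?case using Suc assms(2)
    by (auto intro: continuous_on_compose2)
qed

lemma approx:
  assumes maps: "\<And>n. n \<ge> 1 \<Longrightarrow> f n ` I01 \<subseteq> I01"
    and gm: "\<And>x. x \<in> I01 \<Longrightarrow> g x \<in> I01"
    and coll: "collectively_converges f g" and e: "e > 0"
  shows "\<exists>N0\<ge>1. \<forall>N\<ge>N0. \<forall>k. \<forall>x\<in>I01. dist (fcomp f N k x) ((g ^^ k) x) < e"
proof -
  obtain N0 where N0: "\<forall>N\<ge>N0. \<forall>k::nat. (SUP x\<in>I01. dist (fcomp f N k x) ((g ^^ k) x)) < e"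
    using coll e unfolding collectively_converges_def by blast
  show ?thesis
  proof (intro exI[of _ "max N0 1"] conjI allI impI ballI)
    fix N k x assume N: "max N0 1 \<le> N" and x: "x \<in> I01"
    have bd: "bdd_above ((\<lambda>x. dist (fcomp f N k x) ((g ^^ k) x)) ` I01)"
    proof (rule bdd_aboveI[of _ 1], clarify)
      fix y assume "y \<in> I01"
      then have "fcomp f N k y \<in> I01" "(g ^^ k) y \<in> I01"
        using fcomp_maps[OF maps, where i=N and x=y and k=k] gpow_maps[OF gm] N by auto
      then show "dist (fcomp f N k y) ((g ^^ k) y) \<le> 1"
        unfolding I01_def dist_real_def by auto
    qed
    have "dist (fcomp f N k x) ((g ^^ k) x) \<le> (SUP x\<in>I01. dist (fcomp f N k x) ((g ^^ k) x))"
      by (rule cSUP_upper[OF x bd])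
    also have "\<dots> < e" using N0 N by auto
    finally show "dist (fcomp f N k x) ((g ^^ k) x) < e" .
  qed simp
qed

lemma hit:
  fixes H :: "real \<Rightarrow> real"
  assumes cont: "continuous_on I01 H" and conn: "connected V'"
    and op: "openin (top_of_set I01) V'" and uv: "u \<in> V'" "v \<in> V'" and w: "w > 0"
    and sub: "{y0..y0+w} \<subseteq> {min (H u) (H v) .. max (H u) (H v)}"
  shows "\<exists>V''. nonempty_open V'' \<and> V'' \<subseteq> V' \<and> H ` V'' \<subseteq> {y0..y0+w}"
proof -
  have V'I: "V' \<subseteq> I01" using openin_subset[OF op] by simp
  have cV: "continuous_on V' H" using continuous_on_subset[OF cont V'I] .
  have cimg: "connected (H ` V')" using connected_continuous_image[OF cV conn] .
  have mn: "min (H u) (H v) \<in> H ` V'" "max (H u) (H v) \<in> H ` V'"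
    using uv by (auto simp: min_def max_def)
  have "{min (H u) (H v) .. max (H u) (H v)} \<subseteq> H ` V'"
    using connected_contains_Icc[OF cimg mn] .
  moreover have "y0 + w/2 \<in> {y0..y0+w}" using w by auto
  ultimately have "y0 + w/2 \<in> H ` V'" using sub by (meson subsetD)
  then obtain z where z: "z \<in> V'" "H z = y0 + w/2" by (auto simp: image_iff)
  define V'' where "V'' = V' \<inter> (I01 \<inter> H -` ball (y0 + w/2) (w/2))"
  have "openin (top_of_set I01) (I01 \<inter> H -` ball (y0 + w/2) (w/2))"
    by (rule continuous_openin_preimage[OF cont, where T=UNIV]) auto
  then have "openin (top_of_set I01) V''" unfolding V''_def using op by (rule openin_Int[rotated])
  moreover have "z \<in> V''" using z V'I w unfolding V''_def by auto
  moreover have "H ` V'' \<subseteq> {y0..y0+w}"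
  proof (rule image_subsetI)
    fix z assume "z \<in> V''"
    then have "\<bar>H z - (y0 + w/2)\<bar> < w/2" unfolding V''_def by (simp add: dist_real_def abs_minus_commute)
    then show "H z \<in> {y0..y0+w}" unfolding abs_less_iff atLeastAtMost_iff by linarith
  qed
  moreover have "V'' \<subseteq> V'" unfolding V''_def by blast
  ultimately show ?thesis unfolding nonempty_open_def by blast
qed

lemma grid:
  fixes w a b :: real
  assumes "w > 0" "0 \<le> a" "b \<le> 1" "b - a \<ge> 2*w"
  shows "\<exists>j::nat. real j * w + w \<le> 1 \<and> {real j*w .. real j*w + w} \<subseteq> {a..b}"
proof -
  define j where "j = nat \<lceil>a/w\<rceil>"
  have rj: "real j = real_of_int \<lceil>a/w\<rceil>" using assms unfolding j_def by auto
  have "a/w \<le> real j" "real j < a/w + 1" using rj by linarith+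
  then have "a \<le> real j * w" "real j * w < a + w" using assms(1)
    by (auto simp: field_simps)
  then show ?thesis using assms by (intro exI[of _ j]) auto
qed

lemma grid_finite:
  fixes w :: real assumes "w > 0"
  shows "finite {j::nat. real j * w + w \<le> 1}"
proof (rule finite_subset[of _ "{..nat \<lceil>1/w\<rceil>}"])
  show "{j::nat. real j * w + w \<le> 1} \<subseteq> {..nat \<lceil>1/w\<rceil>}"
  proof
    fix j assume "j \<in> {j::nat. real j * w + w \<le> 1}"
    then have "real j * w \<le> 1" using assms by auto
    then have "real j \<le> 1/w" using assms by (auto simp: field_simps)
    then show "j \<in> {..nat \<lceil>1/w\<rceil>}" by (auto simp: le_nat_iff) linarith
  qed
qed simp

lemma cycle_spread:
  fixes g :: "real \<Rightarrow> real"
  assumes cyc: "G \<subseteq> (g^^K) ` G" and K: "K \<ge> 1" and ab: "a \<in> G" "b \<in> G" "a \<noteq> b"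
  shows "\<exists>c>0. \<forall>s. \<exists>p\<in>G. \<exists>q\<in>G. dist ((g^^s) p) ((g^^s) q) \<ge> c"
proof -
  have mult: "G \<subseteq> (g^^(K*m)) ` G" for m
  proof (induction m)
    case 0 then show ?case by simp
  next
    case (Suc m)
    have e: "K*Suc m = K*m + K" by simp
    have "(g^^(K*Suc m)) ` G = (g^^(K*m)) ` ((g^^K) ` G)"
      unfolding e funpow_add image_comp by simp
    also have "\<dots> \<supseteq> (g^^(K*m)) ` G" using cyc by (rule image_mono)
    finally show ?case using Suc by blast
  qed
  have shift: "(g^^r) ` G \<subseteq> (g^^(r + K*m)) ` G" for r m
  proof -
    have e1: "(g^^(r + K*m)) ` G = (g^^r) ` ((g^^(K*m)) ` G)"
      unfolding funpow_add image_comp by (rule refl)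
    show ?thesis unfolding e1 by (rule image_mono[OF mult[of m]])
  qed
  have nd: "\<exists>p\<in>G. \<exists>q\<in>G. (g^^r) p \<noteq> (g^^r) q" for r
  proof (rule ccontr)
    assume "\<not> ?thesis"
    then have eq: "\<forall>p\<in>G. (g^^r) p = (g^^r) a" using ab(1) by blast
    have rK: "r \<le> K*r" using K by simp
    define d where "d = K*r - r"
    have e: "K*r = d + r" using rK unfolding d_def by simp
    have "(g^^(K*r)) ` G = (g^^d) ` ((g^^r) ` G)"
      unfolding e funpow_add image_comp by (rule refl)
    also have "(g^^r) ` G = {(g^^r) a}" using eq ab(1) by blast
    finally have "G \<subseteq> {(g^^d) ((g^^r) a)}" using mult[of r] by simp
    then show False using ab by auto
  qed
  have "\<exists>c>0. \<forall>r\<in>{..<K}. \<exists>p\<in>G. \<exists>q\<in>G. dist ((g^^r) p) ((g^^r) q) \<ge> c"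
  proof (rule finite_pos_min)
    show "\<forall>r\<in>{..<K}. \<exists>c>0. \<exists>p\<in>G. \<exists>q\<in>G. dist ((g^^r) p) ((g^^r) q) \<ge> c"
    proof
      fix r
      obtain p q where "p \<in> G" "q \<in> G" "(g^^r) p \<noteq> (g^^r) q" using nd by blast
      then show "\<exists>c>0. \<exists>p\<in>G. \<exists>q\<in>G. dist ((g^^r) p) ((g^^r) q) \<ge> c"
        by (intro exI[of _ "dist ((g^^r) p) ((g^^r) q)"]) auto
    qed
  qed (auto intro: order_trans)
  then obtain c where c: "c > 0" "\<forall>r<K. \<exists>p\<in>G. \<exists>q\<in>G. dist ((g^^r) p) ((g^^r) q) \<ge> c"
    by auto
  have "\<exists>p\<in>G. \<exists>q\<in>G. dist ((g^^s) p) ((g^^s) q) \<ge> c" for s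
  proof -
    have sub: "(g^^(s mod K)) ` G \<subseteq> (g^^s) ` G"
      using shift[of "s mod K" "s div K"] by simp
    have "s mod K < K" using K by simp
    then obtain p q where pq: "p \<in> G" "q \<in> G" "dist ((g^^(s mod K)) p) ((g^^(s mod K)) q) \<ge> c"
      using c(2) by blast
    have "(g^^(s mod K)) p \<in> (g^^s) ` G" "(g^^(s mod K)) q \<in> (g^^s) ` G"
      using sub pq by auto
    then obtain p' q' where "p' \<in> G" "q' \<in> G" "(g^^s) p' = (g^^(s mod K)) p" "(g^^s) q' = (g^^(s mod K)) q"
      by auto
    then show ?thesis using pq by (intro bexI[of _ p'] bexI[of _ q']) auto
  qed
  then show ?thesis using c by blast
qed

lemma convex_I01: "convex I01" unfolding I01_def by (rule convex_real_interval)

lemma expand_late: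
  assumes hcont: "\<And>n. continuous_on I01 (fcomp f 1 n)"
    and sens: "\<And>V. nonempty_open V \<Longrightarrow> Nset f V \<delta> \<noteq> {}" and dpos: "\<delta> > 0"
    and V: "nonempty_open V"
  shows "\<exists>V'. nonempty_open V' \<and> connected V' \<and> V' \<subseteq> V \<and>
           (\<exists>n>a. \<exists>u\<in>V'. \<exists>v\<in>V'. dist (fcomp f 1 n u) (fcomp f 1 n v) > \<delta>)"
proof -
  from V obtain x where x: "x \<in> V" and op: "openin (top_of_set I01) V"
    unfolding nonempty_open_def by auto
  have VI: "V \<subseteq> I01" using openin_subset[OF op] by simp
  obtain e where e: "e > 0" "\<forall>x'\<in>I01. dist x' x < e \<longrightarrow> x' \<in> V"
    using op x unfolding openin_euclidean_subtopology_iff by blast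
  have "\<exists>d>0. \<forall>m\<in>{..a}. \<forall>x'\<in>I01. dist x' x < d \<longrightarrow> dist (fcomp f 1 m x') (fcomp f 1 m x) < \<delta>/2"
  proof (rule finite_pos_min)
    show "\<forall>m\<in>{..a}. \<exists>d>0. \<forall>x'\<in>I01. dist x' x < d \<longrightarrow> dist (fcomp f 1 m x') (fcomp f 1 m x) < \<delta>/2"
    proof
      fix m
      show "\<exists>d>0. \<forall>x'\<in>I01. dist x' x < d \<longrightarrow> dist (fcomp f 1 m x') (fcomp f 1 m x) < \<delta>/2"
        using hcont[of m] x VI dpos unfolding continuous_on_iff by (meson half_gt_zero subsetD)
    qed
  qed auto
  then obtain d where d: "d > 0" "\<forall>m\<le>a. \<forall>x'\<in>I01. dist x' x < d \<longrightarrow> dist (fcomp f 1 m x') (fcomp f 1 m x) < \<delta>/2"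
    by auto
  define V' where "V' = I01 \<inter> ball x (min e d)"
  have opV': "openin (top_of_set I01) V'" unfolding V'_def by (rule openin_open_Int) simp
  have xV': "x \<in> V'" unfolding V'_def using x VI e d by auto
  have neV': "nonempty_open V'" unfolding nonempty_open_def using opV' xV' by auto
  have cV': "connected V'" unfolding V'_def
    by (rule convex_connected, rule convex_Int[OF convex_I01 convex_ball])
  have sub: "V' \<subseteq> V" unfolding V'_def using e by (auto simp: dist_commute)
  obtain n where n: "n \<in> Nset f V' \<delta>" using sens[OF neV'] by blast
  then obtain u v where uv: "u \<in> V'" "v \<in> V'" "dist (fcomp f 1 n u) (fcomp f 1 n v) > \<delta>" and n1: "n \<ge> 1"
    unfolding Nset_def by blast
  have "n > a"
  proof (rule ccontr)
    assume "\<not> n > a"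
    then have na: "n \<le> a" by simp
    have "u \<in> I01" "dist u x < d" "v \<in> I01" "dist v x < d" using uv(1,2) unfolding V'_def
      by (auto simp: dist_commute)
    then have "dist (fcomp f 1 n u) (fcomp f 1 n x) < \<delta>/2" "dist (fcomp f 1 n v) (fcomp f 1 n x) < \<delta>/2"
      using d(2) na by blast+
    then have "dist (fcomp f 1 n u) (fcomp f 1 n v) < \<delta>"
      using dist_triangle_half_l by blast
    then show False using uv(3) by simp
  qed
  then show ?thesis using neV' cV' sub uv by blast
qed

lemma minmax_gap:
  fixes A B d :: real
  assumes "d < \<bar>A - B\<bar>" shows "d < max A B - min A B"
proof (cases "A \<le> B")
  case True then show ?thesis using assms by (simp add: max_def min_def)
next
  case False then show ?thesis using assms by (simp add: max_def min_def)
qed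

lemma minmax_close:
  fixes A B P Q e :: real
  assumes "\<bar>A - P\<bar> < e" "\<bar>B - Q\<bar> < e"
  shows "min P Q \<le> min A B + e" "max A B - e \<le> max P Q"
  using assms by (auto simp: min_def max_def abs_less_iff)

lemma cofinite_sens:
  fixes f :: "nat \<Rightarrow> real \<Rightarrow> real" and g :: "real \<Rightarrow> real"
  assumes cont: "\<And>n. n \<ge> 1 \<Longrightarrow> continuous_on I01 (f n)"
    and maps: "\<And>n. n \<ge> 1 \<Longrightarrow> f n ` I01 \<subseteq> I01"
    and unif: "uniform_limit I01 f g sequentially"
    and coll: "collectively_converges f g"
    and sensf: "sensitive f"
  shows "\<exists>\<delta>'>0. \<forall>V. nonempty_open V \<longrightarrow> (\<exists>M. \<forall>m\<ge>M. m \<in> Nset f V \<delta>')"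
proof -
  obtain \<delta> where dpos: "\<delta> > 0" and sens: "\<And>V. nonempty_open V \<Longrightarrow> Nset f V \<delta> \<noteq> {}"
    using sensf unfolding sensitive_def by blast
  have hcont: "\<And>n. continuous_on I01 (fcomp f 1 n)" using fcomp_cont[OF cont maps] by simp
  have hmaps: "\<And>n x. x \<in> I01 \<Longrightarrow> fcomp f 1 n x \<in> I01" using fcomp_maps[OF maps] by simp
  have gm: "\<And>x. x \<in> I01 \<Longrightarrow> g x \<in> I01" using g_maps[OF maps unif] by blast
  have gc: "continuous_on I01 g" using g_cont[OF cont unif] by blast
  have gkc: "\<And>k. continuous_on I01 (g^^k)" using gpow_cont[where g=g, OF gm gc] by blast
  have gkm: "\<And>k x. x \<in> I01 \<Longrightarrow> (g^^k) x \<in> I01" using gpow_maps[where g=g, OF gm] by blast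
  have I01_iff: "\<And>x. x \<in> I01 \<longleftrightarrow> 0 \<le> x \<and> x \<le> 1" unfolding I01_def by simp
  define w where "w = \<delta>/4"
  define e0 where "e0 = \<delta>/8"
  have wpos: "w > 0" and e0pos: "e0 > 0" unfolding w_def e0_def using dpos by auto
  obtain N1 where N1: "N1 \<ge> 1" "\<And>N k x. N \<ge> N1 \<Longrightarrow> x \<in> I01 \<Longrightarrow> dist (fcomp f N k x) ((g ^^ k) x) < e0"
    using approx[OF maps gm coll e0pos] by blast
  define G where "G = (\<lambda>j::nat. {real j * w .. real j * w + w})"
  define Idx where "Idx = {j::nat. real j * w + w \<le> 1}"
  have GI: "\<And>j. j \<in> Idx \<Longrightarrow> G j \<subseteq> I01" unfolding G_def Idx_def I01_def using wpos by auto
  define Rel where "Rel = (\<lambda>j. j \<in> Idx \<and> (\<exists>a\<ge>N1. \<exists>V. nonempty_open V \<and> fcomp f 1 a ` V \<subseteq> G j))"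
  define S where "S = {j. Rel j}"
  have finS: "finite S" unfolding S_def Rel_def
    using grid_finite[OF wpos] by (auto intro: finite_subset simp: Idx_def)
  define R where "R = (\<lambda>i j. \<exists>t\<ge>1. G j \<subseteq> (g^^t) ` G i)"
  have relevant: "Rel j" if rel_asm: "connected V'" "openin (top_of_set I01) V'" "V' \<subseteq> V" "u \<in> V'" "v \<in> V'"
     "n \<ge> N1" "j \<in> Idx" "G j \<subseteq> {min (fcomp f 1 n u) (fcomp f 1 n v) .. max (fcomp f 1 n u) (fcomp f 1 n v)}"
   for V' V u v n j
  proof -
    obtain V'' where "nonempty_open V''" "V'' \<subseteq> V'" "fcomp f 1 n ` V'' \<subseteq> G j"
      using hit[OF hcont rel_asm(1,2,4,5) wpos, of "real j * w"] rel_asm(8) unfolding G_def by blast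
    then show ?thesis unfolding Rel_def using rel_asm(6,7) by blast
  qed
  have edge: "\<exists>j\<in>S. R i j" if iS: "i \<in> S" for i
  proof -
    from iS obtain a V where a: "a \<ge> N1" and V: "nonempty_open V" and aV: "fcomp f 1 a ` V \<subseteq> G i"
      and iI: "i \<in> Idx"
      unfolding S_def Rel_def by blast
    obtain V' n u v where V': "nonempty_open V'" "connected V'" "V' \<subseteq> V" and na: "n > a"
      and uv: "u \<in> V'" "v \<in> V'" "dist (fcomp f 1 n u) (fcomp f 1 n v) > \<delta>"
      using expand_late[OF hcont sens dpos V, of a] by blast
    define s where "s = n - a"
    have ns: "n = a + s" and s1: "s \<ge> 1" unfolding s_def using na by auto
    have hn: "fcomp f 1 n = fcomp f (1 + a) s \<circ> fcomp f 1 a" unfolding ns by (rule fcomp_add)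
    define p where "p = fcomp f 1 a u"
    define q where "q = fcomp f 1 a v"
    have pq: "p \<in> G i" "q \<in> G i" unfolding p_def q_def using aV uv V'(3) by auto
    have pqI: "p \<in> I01" "q \<in> I01" using pq GI[OF iI] by auto
    define A where "A = fcomp f 1 n u"
    define B where "B = fcomp f 1 n v"
    have AB: "A = fcomp f (1 + a) s p" "B = fcomp f (1 + a) s q"
      unfolding A_def B_def p_def q_def hn by simp_all
    have dA: "dist A ((g^^s) p) < e0" "dist B ((g^^s) q) < e0"
      unfolding AB using N1(2)[of "1 + a"] a pqI by auto
    have V'I: "V' \<subseteq> I01" using V'(1) openin_subset unfolding nonempty_open_def by force
    have ABI: "A \<in> I01" "B \<in> I01" unfolding A_def B_def
      using hmaps V'I uv(1,2) by auto
    have dAB: "dist A B > \<delta>" using uv(3) unfolding A_def B_def .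
    obtain j where j: "real j * w + w \<le> 1" "{real j * w .. real j * w + w} \<subseteq> {min A B + e0 .. max A B - e0}"
    proof (rule grid[OF wpos, of "min A B + e0" "max A B - e0", THEN exE])
      show "0 \<le> min A B + e0" using ABI e0pos unfolding I01_iff by auto
      show "max A B - e0 \<le> 1" using ABI e0pos unfolding I01_iff by auto
      show "2 * w \<le> max A B - e0 - (min A B + e0)"
        using minmax_gap[of \<delta> A B] dAB unfolding w_def e0_def dist_real_def by linarith
    qed auto
    have jI: "j \<in> Idx" unfolding Idx_def using j(1) by simp
    have Gj: "G j \<subseteq> {min A B + e0 .. max A B - e0}" unfolding G_def using j(2) .
    have conn: "connected ((g^^s) ` G i)"
    proof (rule connected_continuous_image)
      show "continuous_on (G i) (g ^^ s)" using continuous_on_subset[OF gkc GI[OF iI]] .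
      show "connected (G i)" unfolding G_def by simp
    qed
    have mm: "min ((g^^s) p) ((g^^s) q) \<in> (g^^s) ` G i" "max ((g^^s) p) ((g^^s) q) \<in> (g^^s) ` G i"
      using pq by (auto simp: min_def max_def)
    have "{min ((g^^s) p) ((g^^s) q) .. max ((g^^s) p) ((g^^s) q)} \<subseteq> (g^^s) ` G i"
      using connected_contains_Icc[OF conn mm] .
    moreover have "{min A B + e0 .. max A B - e0} \<subseteq> {min ((g^^s) p) ((g^^s) q) .. max ((g^^s) p) ((g^^s) q)}"
    proof -
      have "\<bar>A - (g^^s) p\<bar> < e0" "\<bar>B - (g^^s) q\<bar> < e0" using dA unfolding dist_real_def .
      then have "min ((g^^s) p) ((g^^s) q) \<le> min A B + e0" "max A B - e0 \<le> max ((g^^s) p) ((g^^s) q)"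
        by (rule minmax_close)+
      then show ?thesis by auto
    qed
    ultimately have "G j \<subseteq> (g^^s) ` G i" using Gj by blast
    then have Rij: "R i j" unfolding R_def using s1 by blast
    have "G j \<subseteq> {min A B .. max A B}" using Gj e0pos by auto
    then have "Rel j"
      using relevant[OF V'(2) _ V'(3) uv(1,2), of n j] V'(1) na a jI unfolding nonempty_open_def A_def B_def
      by auto
    then show ?thesis using Rij unfolding S_def by blast
  qed
  have trR: "R a c" if Rab: "R a b" and Rbc: "R b c" for a b c
  proof -
    obtain t where t: "t \<ge> 1" "G b \<subseteq> (g^^t) ` G a" using Rab unfolding R_def by blast
    obtain u where u: "u \<ge> 1" "G c \<subseteq> (g^^u) ` G b" using Rbc unfolding R_def by blast
    have "(g^^u) ` G b \<subseteq> (g^^u) ` ((g^^t) ` G a)" using t(2) by (rule image_mono)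
    also have "\<dots> = (g^^(u + t)) ` G a" unfolding funpow_add image_comp by (rule refl)
    finally show ?thesis unfolding R_def using u t by (intro exI[of _ "u + t"]) auto
  qed
  have spread: "\<exists>c>0. \<exists>t. \<forall>s\<ge>t. \<exists>p\<in>G i. \<exists>q\<in>G i. dist ((g^^s) p) ((g^^s) q) \<ge> c"
    if iS: "i \<in> S" for i
  proof -
    have "\<exists>j\<in>S. R i j \<and> R j j"
    proof (rule graph_cycle[OF finS])
      show "\<And>a b c. R a b \<Longrightarrow> R b c \<Longrightarrow> R a c" by (rule trR)
      show "\<And>i. i \<in> S \<Longrightarrow> \<exists>j\<in>S. R i j" by (rule edge)
    qed (rule iS)
    then obtain j where jS: "j \<in> S" and Rij: "R i j" and Rjj: "R j j" by blast
    obtain t where t: "G j \<subseteq> (g^^t) ` G i" using Rij unfolding R_def by blast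
    obtain K where K: "K \<ge> 1" "G j \<subseteq> (g^^K) ` G j" using Rjj unfolding R_def by blast
    have ab: "real j * w \<in> G j" "real j * w + w \<in> G j" "real j * w \<noteq> real j * w + w"
      unfolding G_def using wpos by auto
    obtain c where c: "c > 0" "\<And>s. \<exists>p\<in>G j. \<exists>q\<in>G j. dist ((g^^s) p) ((g^^s) q) \<ge> c"
      using cycle_spread[OF K(2) K(1) ab] by blast
    have "\<exists>p\<in>G i. \<exists>q\<in>G i. dist ((g^^s) p) ((g^^s) q) \<ge> c" if st: "s \<ge> t" for s
    proof -
      obtain p' q' where pq': "p' \<in> G j" "q' \<in> G j" "dist ((g^^(s-t)) p') ((g^^(s-t)) q') \<ge> c"
        using c(2) by blast
      have "(g^^(s-t)) ` G j \<subseteq> (g^^(s-t)) ` ((g^^t) ` G i)" using t by (rule image_mono)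
      also have "\<dots> = (g^^((s-t)+t)) ` G i" unfolding funpow_add image_comp by (rule refl)
      also have "\<dots> = (g^^s) ` G i" using st by simp
      finally have sub: "(g^^(s-t)) ` G j \<subseteq> (g^^s) ` G i" .
      have "(g^^(s-t)) p' \<in> (g^^s) ` G i" "(g^^(s-t)) q' \<in> (g^^s) ` G i"
        using subsetD[OF sub imageI[OF pq'(1)]] subsetD[OF sub imageI[OF pq'(2)]] by auto
      then obtain p q where p: "p \<in> G i" "(g^^s) p = (g^^(s-t)) p'" and q: "q \<in> G i" "(g^^s) q = (g^^(s-t)) q'"
        unfolding image_iff by metis
      show ?thesis using p q pq'(3) by (intro bexI[of _ p] bexI[of _ q]) auto
    qed
    then show ?thesis using c(1) by blast
  qed
  have "\<exists>c>0. \<forall>i\<in>S. \<exists>t. \<forall>s\<ge>t. \<exists>p\<in>G i. \<exists>q\<in>G i. dist ((g^^s) p) ((g^^s) q) \<ge> c"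
  proof (rule finite_pos_min[OF finS])
    show "\<forall>i\<in>S. \<exists>c>0. \<exists>t. \<forall>s\<ge>t. \<exists>p\<in>G i. \<exists>q\<in>G i. dist ((g^^s) p) ((g^^s) q) \<ge> c"
      using spread by blast
  next
    fix i and c c' :: real
    assume h: "\<exists>t. \<forall>s\<ge>t. \<exists>p\<in>G i. \<exists>q\<in>G i. dist ((g^^s) p) ((g^^s) q) \<ge> c" "0 < c'" "c' \<le> c"
    then obtain t where t: "\<forall>s\<ge>t. \<exists>p\<in>G i. \<exists>q\<in>G i. dist ((g^^s) p) ((g^^s) q) \<ge> c" by blast
    have "\<exists>p\<in>G i. \<exists>q\<in>G i. dist ((g^^s) p) ((g^^s) q) \<ge> c'" if st2: "s \<ge> t" for s
    proof -
      obtain p q where "p \<in> G i" "q \<in> G i" "dist ((g^^s) p) ((g^^s) q) \<ge> c" using t st2 by blast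
      then show ?thesis using h(3) by (intro bexI[of _ p] bexI[of _ q]) auto
    qed
    then show "\<exists>t. \<forall>s\<ge>t. \<exists>p\<in>G i. \<exists>q\<in>G i. dist ((g^^s) p) ((g^^s) q) \<ge> c'" by blast
  qed
  then obtain c where cpos: "c > 0"
    and cS: "\<And>i. i \<in> S \<Longrightarrow> \<exists>t. \<forall>s\<ge>t. \<exists>p\<in>G i. \<exists>q\<in>G i. dist ((g^^s) p) ((g^^s) q) \<ge> c"
    by blast
  define e where "e = min e0 (c/4)"
  have epos: "e > 0" unfolding e_def using e0pos cpos by simp
  obtain N2 where N2: "\<And>N k x. N \<ge> N2 \<Longrightarrow> x \<in> I01 \<Longrightarrow> dist (fcomp f N k x) ((g ^^ k) x) < e"
    using approx[OF maps gm coll epos] by blast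
  show ?thesis
  proof (intro exI[of _ "c/4"] conjI allI impI)
    show "c/4 > 0" using cpos by simp
    fix V assume V: "nonempty_open V"
    obtain V' n u v where V': "nonempty_open V'" "connected V'" "V' \<subseteq> V" and na: "n > max N1 N2"
      and uv: "u \<in> V'" "v \<in> V'" "dist (fcomp f 1 n u) (fcomp f 1 n v) > \<delta>"
      using expand_late[OF hcont sens dpos V, of "max N1 N2"] by blast
    have V'I: "V' \<subseteq> I01" using V'(1) openin_subset unfolding nonempty_open_def by force
    define A where "A = fcomp f 1 n u"
    define B where "B = fcomp f 1 n v"
    have ABI: "A \<in> I01" "B \<in> I01" unfolding A_def B_def using hmaps V'I uv(1,2) by auto
    have dAB: "dist A B > \<delta>" using uv(3) unfolding A_def B_def .
    obtain j where j: "real j * w + w \<le> 1" "{real j * w .. real j * w + w} \<subseteq> {min A B .. max A B}"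
    proof (rule grid[OF wpos, of "min A B" "max A B", THEN exE])
      show "0 \<le> min A B" using ABI unfolding I01_iff by auto
      show "max A B \<le> 1" using ABI unfolding I01_iff by auto
      show "2 * w \<le> max A B - min A B"
        using minmax_gap[of \<delta> A B] dAB unfolding w_def dist_real_def by linarith
    qed auto
    have jI: "j \<in> Idx" unfolding Idx_def using j(1) by simp
    have Gj: "G j \<subseteq> {min A B .. max A B}" unfolding G_def using j(2) .
    have "Rel j"
      using relevant[OF V'(2) _ V'(3) uv(1,2), of n j] V'(1) na jI Gj unfolding nonempty_open_def A_def B_def
      by auto
    then obtain t where t: "\<forall>s\<ge>t. \<exists>p\<in>G j. \<exists>q\<in>G j. dist ((g^^s) p) ((g^^s) q) \<ge> c"
      using cS unfolding S_def by blast
    have cimg: "connected (fcomp f 1 n ` V')"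
      using connected_continuous_image[OF continuous_on_subset[OF hcont V'I] V'(2)] .
    have mm: "min A B \<in> fcomp f 1 n ` V'" "max A B \<in> fcomp f 1 n ` V'"
      unfolding A_def B_def using uv(1,2) by (auto simp: min_def max_def)
    have Gimg: "G j \<subseteq> fcomp f 1 n ` V'"
      using Gj connected_contains_Icc[OF cimg mm] by blast
    show "\<exists>M. \<forall>m\<ge>M. m \<in> Nset f V (c/4)"
    proof (intro exI[of _ "n + t"] allI impI)
      fix m assume m: "m \<ge> n + t"
      define s where "s = m - n"
      have ms: "m = n + s" and st: "s \<ge> t" unfolding s_def using m by auto
      obtain p q where pq: "p \<in> G j" "q \<in> G j" "dist ((g^^s) p) ((g^^s) q) \<ge> c"
        using t st by blast
      obtain u' where u': "u' \<in> V'" "fcomp f 1 n u' = p" using Gimg pq(1) by blast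
      obtain v' where v': "v' \<in> V'" "fcomp f 1 n v' = q" using Gimg pq(2) by blast
      have hm: "fcomp f 1 m = fcomp f (1 + n) s \<circ> fcomp f 1 n" unfolding ms by (rule fcomp_add)
      have pqI: "p \<in> I01" "q \<in> I01" using u' v' hmaps V'I by auto
      have d1: "dist (fcomp f 1 m u') ((g^^s) p) < e" "dist (fcomp f 1 m v') ((g^^s) q) < e"
        unfolding hm using N2[of "1 + n"] na pqI u'(2) v'(2) by auto
      have t1: "dist ((g^^s) p) ((g^^s) q) \<le> dist ((g^^s) p) (fcomp f 1 m u') + dist (fcomp f 1 m u') ((g^^s) q)"
        by (rule dist_triangle)
      have t2: "dist (fcomp f 1 m u') ((g^^s) q) \<le> dist (fcomp f 1 m u') (fcomp f 1 m v') + dist (fcomp f 1 m v') ((g^^s) q)"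
        by (rule dist_triangle)
      have tri: "dist ((g^^s) p) ((g^^s) q) \<le> dist ((g^^s) p) (fcomp f 1 m u') + dist (fcomp f 1 m u') (fcomp f 1 m v') + dist (fcomp f 1 m v') ((g^^s) q)"
        using t1 t2 by linarith
      then have "dist (fcomp f 1 m u') (fcomp f 1 m v') > c/4"
      proof -
        have "e \<le> c/4" unfolding e_def by simp
        then have "dist ((g^^s) p) (fcomp f 1 m u') < c/4" "dist (fcomp f 1 m v') ((g^^s) q) < c/4"
          using d1 by (simp_all add: dist_commute)
        then show ?thesis using tri pq(3) cpos by linarith
      qed
      moreover have "m \<ge> 1" using m na by simp
      ultimately show "m \<in> Nset f V (c/4)" unfolding Nset_def using u'(1) v'(1) V'(3) by blast
    qed
  qed
qed

definition cofin_sens :: "(nat \<Rightarrow> real \<Rightarrow> real) \<Rightarrow> bool" where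
  "cofin_sens f \<longleftrightarrow> (\<exists>\<delta>'>0. \<forall>V. nonempty_open V \<longrightarrow> (\<exists>M. \<forall>m\<ge>M. m \<in> Nset f V \<delta>'))"

lemma choose_bounds:
  fixes P :: "nat \<Rightarrow> nat \<Rightarrow> bool" and L :: nat
  assumes "\<And>i. i < L \<Longrightarrow> \<exists>M. \<forall>m\<ge>M. P i m"
  shows "\<exists>n\<ge>1. \<forall>i<L. \<forall>m\<ge>n. P i m"
proof -
  from assms have "\<forall>i. \<exists>M. i < L \<longrightarrow> (\<forall>m\<ge>M. P i m)" by blast
  then obtain Mf where Mf: "\<And>i. i < L \<Longrightarrow> \<forall>m\<ge>Mf i. P i m" by metis
  have le: "Mf i \<le> 1 + (\<Sum>i<L. Mf i)" if "i < L" for i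
  proof -
    have "Mf i \<le> (\<Sum>i<L. Mf i)" using that by (intro member_le_sum) auto
    then show ?thesis by simp
  qed
  show ?thesis
  proof (intro exI[of _ "1 + (\<Sum>i<L. Mf i)"] conjI allI impI)
    fix i m assume "i < L" "1 + (\<Sum>i<L. Mf i) \<le> m"
    then show "P i m" using Mf le[of i] by auto
  qed simp
qed

lemma cof_SM:
  assumes "cofin_sens f" shows "strongly_multi_sensitive f"
  unfolding strongly_multi_sensitive_def
proof (intro allI impI)
  fix vs :: "nat list" assume vs: "vs \<noteq> [] \<and> (\<forall>v\<in>set vs. v \<ge> 1)"
  obtain d where d: "d > 0" "\<And>V. nonempty_open V \<Longrightarrow> \<exists>M. \<forall>m\<ge>M. m \<in> Nset f V d"
    using assms unfolding cofin_sens_def by blast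
  show "multi_sensitive_wrt f vs"
    unfolding multi_sensitive_wrt_def
  proof (intro exI[of _ d] conjI allI impI)
    show "d > 0" by (rule d(1))
    fix Us :: "real set list" assume Us: "length Us = length vs \<and> (\<forall>U\<in>set Us. nonempty_open U)"
    have "\<exists>M. \<forall>m\<ge>M. m \<in> Nset f (Us ! i) d" if "i < length vs" for i
    proof -
      have "Us ! i \<in> set Us" using Us that by simp
      then show ?thesis using d(2) Us by blast
    qed
    then obtain n where n: "n \<ge> 1" "\<And>i m. i < length vs \<Longrightarrow> m \<ge> n \<Longrightarrow> m \<in> Nset f (Us ! i) d"
      using choose_bounds[of "length vs" "\<lambda>i m. m \<in> Nset f (Us ! i) d"] by blast
    have "n \<in> Nset (fpow_seq f (vs ! i)) (Us ! i) d" if i: "i < length vs" for i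
    proof -
      have "vs ! i \<in> set vs" using i by simp
      then have "vs ! i \<ge> 1" using vs by blast
      then have "vs ! i * n \<ge> n" by simp
      then have "vs ! i * n \<in> Nset f (Us ! i) d" using n(2) i by blast
      then show ?thesis unfolding Nset_pow using n(1) unfolding Nset_def by blast
    qed
    then show "(\<Inter>i<length vs. Nset (fpow_seq f (vs ! i)) (Us ! i) d) \<noteq> {}" by blast
  qed
qed

lemma cof_M:
  assumes "cofin_sens f" shows "multi_sensitive f"
  unfolding multi_sensitive_def
proof -
  obtain d where d: "d > 0" "\<And>V. nonempty_open V \<Longrightarrow> \<exists>M. \<forall>m\<ge>M. m \<in> Nset f V d"
    using assms unfolding cofin_sens_def by blast
  show "\<exists>\<delta>>0. \<forall>Vs::real set list. Vs \<noteq> [] \<and> (\<forall>V\<in>set Vs. nonempty_open V) \<longrightarrow>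
       (\<Inter>i<length Vs. Nset f (Vs ! i) \<delta>) \<noteq> {}"
  proof (intro exI[of _ d] conjI allI impI)
    show "d > 0" by (rule d(1))
    fix Vs :: "real set list" assume Vs: "Vs \<noteq> [] \<and> (\<forall>V\<in>set Vs. nonempty_open V)"
    have "\<exists>M. \<forall>m\<ge>M. m \<in> Nset f (Vs ! i) d" if "i < length Vs" for i
    proof -
      have "Vs ! i \<in> set Vs" using that by simp
      then show ?thesis using d(2) Vs by blast
    qed
    then obtain n where n: "n \<ge> 1" "\<And>i m. i < length Vs \<Longrightarrow> m \<ge> n \<Longrightarrow> m \<in> Nset f (Vs ! i) d"
      using choose_bounds[of "length Vs" "\<lambda>i m. m \<in> Nset f (Vs ! i) d"] by blast
    then have "n \<in> (\<Inter>i<length Vs. Nset f (Vs ! i) d)" by blast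
    then show "(\<Inter>i<length Vs. Nset f (Vs ! i) d) \<noteq> {}" by blast
  qed
qed

lemma SM_N: "strongly_multi_sensitive f \<Longrightarrow> N_sensitive f"
  unfolding strongly_multi_sensitive_def N_sensitive_def
proof (intro allI impI)
  fix n :: nat assume A: "\<forall>vs. vs \<noteq> [] \<and> (\<forall>v\<in>set vs. 1 \<le> v) \<longrightarrow> multi_sensitive_wrt f vs" and n: "n \<ge> 1"
  have "[1..<n+1] \<noteq> []" using n by simp
  moreover have "\<forall>v\<in>set [1..<n+1]. 1 \<le> v" by auto
  ultimately show "multi_sensitive_wrt f [1..<n+1]" using A by blast
qed

lemma N_S: "N_sensitive f \<Longrightarrow> sensitive f"
proof -
  assume "N_sensitive f"
  then have "multi_sensitive_wrt f [1..<1+1]" unfolding N_sensitive_def by blast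
  then obtain d where d: "d > 0" and A: "\<And>Us::real set list. length Us = 1 \<and> (\<forall>U\<in>set Us. nonempty_open U) \<Longrightarrow>
       (\<Inter>i<1. Nset (fpow_seq f ([1] ! i)) (Us ! i) d) \<noteq> {}"
    unfolding multi_sensitive_wrt_def by auto
  show "sensitive f" unfolding sensitive_def
  proof (intro exI[of _ d] conjI allI impI)
    show "d > 0" by (rule d)
    fix V assume V: "nonempty_open V"
    have "(\<Inter>i<1. Nset (fpow_seq f ([1] ! i)) ([V] ! i) d) \<noteq> {}" using A[of "[V]"] V by simp
    then have "Nset (fpow_seq f 1) V d \<noteq> {}" by (simp add: lessThan_Suc)
    then show "Nset f V d \<noteq> {}" unfolding Nset_def fcomp_pow by simp
  qed
qed

lemma M_S: "multi_sensitive f \<Longrightarrow> sensitive f"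
proof -
  assume "multi_sensitive f"
  then obtain d where d: "d > 0" and A: "\<And>Vs::real set list. Vs \<noteq> [] \<and> (\<forall>V\<in>set Vs. nonempty_open V) \<Longrightarrow>
       (\<Inter>i<length Vs. Nset f (Vs ! i) d) \<noteq> {}"
    unfolding multi_sensitive_def by auto
  show "sensitive f" unfolding sensitive_def
  proof (intro exI[of _ d] conjI allI impI)
    show "d > 0" by (rule d)
    fix V assume V: "nonempty_open V"
    show "Nset f V d \<noteq> {}" using A[of "[V]"] V by (simp add: lessThan_Suc)
  qed
qed

theorem mainTheorem8:
  fixes f :: "nat \<Rightarrow> real \<Rightarrow> real" and g :: "real \<Rightarrow> real"
  assumes cont: "\<And>n. n \<ge> 1 \<Longrightarrow> continuous_on I01 (f n)"
    and maps: "\<And>n. n \<ge> 1 \<Longrightarrow> f n ` I01 \<subseteq> I01"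
    and unif: "uniform_limit I01 f g sequentially"
    and coll: "collectively_converges f g"
    and feeb: "feebly_open f"
  shows "(strongly_multi_sensitive f \<longleftrightarrow> N_sensitive f)
       \<and> (N_sensitive f \<longleftrightarrow> multi_sensitive f)
       \<and> (multi_sensitive f \<longleftrightarrow> sensitive f)"
proof -
  have SC: "sensitive f \<Longrightarrow> cofin_sens f"
    unfolding cofin_sens_def using cofinite_sens[OF cont maps unif coll] by blast
  have "sensitive f \<Longrightarrow> strongly_multi_sensitive f" using SC cof_SM by blast
  moreover have "sensitive f \<Longrightarrow> multi_sensitive f" using SC cof_M by blast
  moreover note SM_N[of f] N_S[of f] M_S[of f]
  ultimately show ?thesis by blast
qed

end
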